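(* Let $H$ be an undirected graph and let $\vec H$ be any acyclic orientation of $H$. Then $\mathrm{dtw}(\vec H)\le\mathrm{tw}(H)+1$.
   Context: For a DAG $\vec H$, a source is a vertex of in-degree $0$; $S$ denotes the set of sources; $R(s)$ is the set of vertices reachable from $s$, and $R(B)=\bigcup_{s\in B}R(s)$. A DAG tree decomposition of $\vec H$ is a tree $T$ whose nodes (bags) are subsets of $S$ such that every source lies in some bag and, for any bags $B,B_1,B_2$ with $B$ on the path between $B_1$ and $B_2$ in $T$, $R(B_1)\cap R(B_2)\subseteq R(B)$; its width is the maximum bag size and $\mathrm{dtw}(\vec H)$ is the minimum width. $\mathrm{tw}$ is the usual treewidth. *)

theory Defs
  imports Main
begin

definition ugraph :: "'a set \<Rightarrow> ('a \<times> 'a) set \<Rightarrow> bool" where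
  "ugraph V E \<longleftrightarrow> finite V \<and> E \<subseteq> V \<times> V \<and> sym E \<and> irrefl E"

definition orientation :: "('a \<times> 'a) set \<Rightarrow> ('a \<times> 'a) set \<Rightarrow> bool" where
  "orientation E D \<longleftrightarrow> D \<subseteq> E \<and>
     (\<forall>u v. (u, v) \<in> E \<longrightarrow> ((u, v) \<in> D \<longleftrightarrow> (v, u) \<notin> D))"

definition spath :: "'n set \<Rightarrow> ('n \<times> 'n) set \<Rightarrow> 'n \<Rightarrow> 'n \<Rightarrow> 'n list \<Rightarrow> bool" where
  "spath N TE a b p \<longleftrightarrow> p \<noteq> [] \<and> hd p = a \<and> last p = b \<and> distinct p \<and>
     set p \<subseteq> N \<and> (\<forall>i. Suc i < length p \<longrightarrow> (p ! i, p ! Suc i) \<in> TE)"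

definition is_tree :: "'n set \<Rightarrow> ('n \<times> 'n) set \<Rightarrow> bool" where
  "is_tree N TE \<longleftrightarrow> finite N \<and> N \<noteq> {} \<and> TE \<subseteq> N \<times> N \<and> sym TE \<and> irrefl TE \<and>
     (\<forall>a\<in>N. \<forall>b\<in>N. \<exists>!p. spath N TE a b p)"

definition on_path :: "'n set \<Rightarrow> ('n \<times> 'n) set \<Rightarrow> 'n \<Rightarrow> 'n \<Rightarrow> 'n \<Rightarrow> bool" where
  "on_path N TE t1 t2 t \<longleftrightarrow> (\<exists>p. spath N TE t1 t2 p \<and> t \<in> set p)"

definition tree_decomp ::
  "'a set \<Rightarrow> ('a \<times> 'a) set \<Rightarrow> 'n set \<Rightarrow> ('n \<times> 'n) set \<Rightarrow> ('n \<Rightarrow> 'a set) \<Rightarrow> bool" where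
  "tree_decomp V E N TE X \<longleftrightarrow> is_tree N TE \<and>
     (\<forall>t\<in>N. X t \<subseteq> V) \<and>
     (\<forall>v\<in>V. \<exists>t\<in>N. v \<in> X t) \<and>
     (\<forall>(u, v)\<in>E. \<exists>t\<in>N. u \<in> X t \<and> v \<in> X t) \<and>
     (\<forall>t1\<in>N. \<forall>t2\<in>N. \<forall>t\<in>N. on_path N TE t1 t2 t \<longrightarrow> X t1 \<inter> X t2 \<subseteq> X t)"

text \<open>Treewidth: minimum over tree decompositions of (maximum bag size - 1).
Tree nodes are taken from nat, which is no restriction for finite trees.\<close>
definition treewidth :: "'a set \<Rightarrow> ('a \<times> 'a) set \<Rightarrow> int" where
  "treewidth V E = int (LEAST k. \<exists>(N :: nat set) TE X. tree_decomp V E N TE X \<and>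
       (\<forall>t\<in>N. card (X t) \<le> k)) - 1"

definition sources :: "'a set \<Rightarrow> ('a \<times> 'a) set \<Rightarrow> 'a set" where
  "sources V D = {s \<in> V. \<forall>u. (u, s) \<notin> D}"

definition reach :: "('a \<times> 'a) set \<Rightarrow> 'a \<Rightarrow> 'a set" where
  "reach D s = {v. (s, v) \<in> D\<^sup>*}"

definition reach_set :: "('a \<times> 'a) set \<Rightarrow> 'a set \<Rightarrow> 'a set" where
  "reach_set D B = (\<Union>s\<in>B. reach D s)"

definition dag_tree_decomp ::
  "'a set \<Rightarrow> ('a \<times> 'a) set \<Rightarrow> 'n set \<Rightarrow> ('n \<times> 'n) set \<Rightarrow> ('n \<Rightarrow> 'a set) \<Rightarrow> bool" where
  "dag_tree_decomp V D N TE X \<longleftrightarrow> is_tree N TE \<and>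
     (\<forall>t\<in>N. X t \<subseteq> sources V D) \<and>
     (\<forall>s\<in>sources V D. \<exists>t\<in>N. s \<in> X t) \<and>
     (\<forall>t1\<in>N. \<forall>t2\<in>N. \<forall>t\<in>N. on_path N TE t1 t2 t \<longrightarrow>
        reach_set D (X t1) \<inter> reach_set D (X t2) \<subseteq> reach_set D (X t))"

definition dag_treewidth :: "'a set \<Rightarrow> ('a \<times> 'a) set \<Rightarrow> nat" where
  "dag_treewidth V D = (LEAST k. \<exists>(N :: nat set) TE X. dag_tree_decomp V D N TE X \<and>
       (\<forall>t\<in>N. card (X t) \<le> k))"

end

theory Submission
  imports Defs
begin

fun walk :: "('n \<times> 'n) set \<Rightarrow> 'n list \<Rightarrow> bool" where
  "walk TE [] = True"
| "walk TE [x] = True"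
| "walk TE (x # y # xs) = ((x, y) \<in> TE \<and> walk TE (y # xs))"

lemma walk_iff: "walk TE p \<longleftrightarrow> (\<forall>i. Suc i < length p \<longrightarrow> (p ! i, p ! Suc i) \<in> TE)"
proof (induction TE p rule: walk.induct)
  case (3 TE x y xs)
  show ?case
  proof
    assume "walk TE (x # y # xs)"
    then show "\<forall>i. Suc i < length (x # y # xs) \<longrightarrow> ((x # y # xs) ! i, (x # y # xs) ! Suc i) \<in> TE"
      using 3 by (auto simp: nth_Cons split: nat.splits)
  next
    assume h: "\<forall>i. Suc i < length (x # y # xs) \<longrightarrow> ((x # y # xs) ! i, (x # y # xs) ! Suc i) \<in> TE"
    have "(x, y) \<in> TE" using h[rule_format, of 0] by simp
    moreover have "walk TE (y # xs)" unfolding 3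
    proof (intro allI impI)
      fix i assume "Suc i < length (y # xs)"
      then show "((y # xs) ! i, (y # xs) ! Suc i) \<in> TE" using h[rule_format, of "Suc i"] by simp
    qed
    ultimately show "walk TE (x # y # xs)" by simp
  qed
qed auto

lemma walk_append: "walk TE (xs @ ys) \<longleftrightarrow> walk TE xs \<and> walk TE ys \<and> (xs \<noteq> [] \<and> ys \<noteq> [] \<longrightarrow> (last xs, hd ys) \<in> TE)"
proof (induction xs rule: walk.induct[of _ TE])
  case (2 x)
  then show ?case by (cases ys) auto
qed auto

lemma walk_to_spath:
  "p \<noteq> [] \<Longrightarrow> set p \<subseteq> N \<Longrightarrow> walk TE p \<Longrightarrow> \<exists>q. spath N TE (hd p) (last p) q \<and> set q \<subseteq> set p"
proof (induction "length p" arbitrary: p rule: less_induct)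
  case less
  show ?case
  proof (cases "distinct p")
    case True
    then show ?thesis using less.prems unfolding spath_def walk_iff by auto
  next
    case False
    then obtain as bs cs x where p: "p = as @ [x] @ bs @ [x] @ cs" using not_distinct_decomp by blast
    define p' where "p' = as @ x # cs"
    have w1: "walk TE (x # cs)" using less.prems(3) walk_append[of TE "as @ x # bs" "x # cs"] unfolding p by simp
    have w: "walk TE p'" using less.prems(3) w1 unfolding p p'_def
      by (auto simp: walk_append)
    have "length p' < length p" unfolding p p'_def by simp
    moreover have "hd p' = hd p" "last p' = last p" unfolding p p'_def by (cases as; auto)+
    moreover have "set p' \<subseteq> set p" unfolding p p'_def by auto
    ultimately show ?thesis using less.hyps[of p'] w less.prems unfolding p'_def by fastforce
  qed
qed

lemma tree_split:
  assumes T: "is_tree N TE" and a: "a \<in> N" and b: "b \<in> N" and c: "c \<in> N"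
    and op: "on_path N TE a c t"
  shows "on_path N TE a b t \<or> on_path N TE b c t"
proof -
  obtain p where p: "spath N TE a b p" using T a b unfolding is_tree_def by blast
  obtain q where q: "spath N TE b c q" using T b c unfolding is_tree_def by blast
  define r where "r = p @ tl q"
  have wp: "walk TE p" and wq: "walk TE q" using p q unfolding spath_def walk_iff by auto
  have wr: "walk TE r"
  proof (cases "tl q")
    case Nil then show ?thesis using wp unfolding r_def by simp
  next
    case (Cons y ys)
    then obtain z where qz: "q = z # y # ys" by (cases q) auto
    then have "z = b" using q unfolding spath_def by simp
    then show ?thesis using wp wq p qz unfolding r_def spath_def by (auto simp: walk_append)
  qed
  have hr: "hd r = a" and lr: "last r = c" and nr: "r \<noteq> []"
    using p q unfolding r_def spath_def
    by (cases q; cases "tl q"; auto)+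
  have sr: "set r \<subseteq> set p \<union> set q" unfolding r_def by (cases q) auto
  have "set r \<subseteq> N" using sr p q unfolding spath_def by auto
  then obtain q' where q': "spath N TE a c q'" "set q' \<subseteq> set r"
    using walk_to_spath[OF nr _ wr] hr lr by metis
  obtain r' where r': "spath N TE a c r'" "t \<in> set r'" using op unfolding on_path_def by blast
  have "r' = q'" using T a c q' r' unfolding is_tree_def by blast
  then have "t \<in> set p \<or> t \<in> set q" using r' q' sr by auto
  then show ?thesis using p q unfolding on_path_def by blast
qed

lemma td_path:
  assumes "tree_decomp V E N TE X" "t1 \<in> N" "t2 \<in> N" "t \<in> N" "on_path N TE t1 t2 t"
    "x \<in> X t1" "x \<in> X t2"
  shows "x \<in> X t"
proof -
  have "\<forall>t1\<in>N. \<forall>t2\<in>N. \<forall>t\<in>N. on_path N TE t1 t2 t \<longrightarrow> X t1 \<inter> X t2 \<subseteq> X t"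
    using assms(1) unfolding tree_decomp_def by (elim conjE)
  then show ?thesis using assms by blast
qed

lemma separator:
  assumes td: "tree_decomp V E N TE X"
    and CW: "CW = {(x, y). x \<in> W \<and> y \<in> W \<and> (\<exists>t\<in>N. x \<in> X t \<and> y \<in> X t)}"
    and xy: "(x, y) \<in> CW\<^sup>*" and xW: "x \<in> W"
  shows "\<forall>t1\<in>N. \<forall>t2\<in>N. \<forall>t\<in>N. x \<in> X t1 \<longrightarrow> y \<in> X t2 \<longrightarrow> on_path N TE t1 t2 t \<longrightarrow> (\<exists>z\<in>W. z \<in> X t)"
  using xy xW
proof (induction rule: converse_rtrancl_induct)
  case base
  then show ?case using td_path[OF td] by blast
next
  case (step x x')
  show ?case
  proof (intro ballI impI)
    fix t1 t2 t assume t1: "t1 \<in> N" and t2: "t2 \<in> N" and t: "t \<in> N"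
      and x1: "x \<in> X t1" and y2: "y \<in> X t2" and op: "on_path N TE t1 t2 t"
    obtain t' where t': "t' \<in> N" "x \<in> X t'" "x' \<in> X t'" "x' \<in> W" using step.hyps(1) CW by blast
    have T: "is_tree N TE" using td unfolding tree_decomp_def by (elim conjE)
    from tree_split[OF T t1 t'(1) t2 op]
    show "\<exists>z\<in>W. z \<in> X t"
    proof
      assume "on_path N TE t1 t' t"
      then have "x \<in> X t" using td_path[OF td t1 t'(1) t _ x1 t'(2)] by blast
      then show ?thesis using step.prems by blast
    next
      assume "on_path N TE t' t2 t"
      then show ?thesis using step.IH t'(4) t'(1) t2 t t'(3) y2 by blast
    qed
  qed
qed

lemma src_exists:
  assumes "finite D" "acyclic D" "D \<subseteq> V \<times> V" "w \<in> V"
  shows "\<exists>\<sigma>\<in>sources V D. (\<sigma>, w) \<in> D\<^sup>*"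
proof -
  have wf: "wf D" using finite_acyclic_wf assms(1,2) .
  have "w \<in> {u. (u, w) \<in> D\<^sup>*}" by simp
  then obtain z where z: "z \<in> {u. (u, w) \<in> D\<^sup>*}" and m: "\<And>y. (y, z) \<in> D \<Longrightarrow> y \<notin> {u. (u, w) \<in> D\<^sup>*}"
    using wfE_min[OF wf] by metis
  have nz: "(y, z) \<notin> D" for y
  proof
    assume "(y, z) \<in> D"
    then have "(y, w) \<in> D\<^sup>*" using z by (simp add: converse_rtrancl_into_rtrancl)
    then show False using m[of y] \<open>(y, z) \<in> D\<close> by simp
  qed
  have "z \<in> V"
  proof (cases "z = w")
    case False
    then obtain u where "(z, u) \<in> D" using z by (auto elim: converse_rtranclE)
    then show ?thesis using assms(3) by blast
  qed (use assms in simp)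
  then show ?thesis using nz z unfolding sources_def by blast
qed


theorem mainTheorem14:
  fixes V :: "'a set" and E D :: "('a \<times> 'a) set"
  assumes "ugraph V E"
    and "orientation E D"
    and "acyclic D"
  shows "int (dag_treewidth V D) \<le> treewidth V E + 1"
proof -
  have finV: "finite V" and EV: "E \<subseteq> V \<times> V" using assms(1) unfolding ugraph_def by auto
  have DE: "D \<subseteq> E" using assms(2) unfolding orientation_def by auto
  have DV: "D \<subseteq> V \<times> V" using DE EV by auto
  have finD: "finite D" using finite_subset[OF DV] finV by auto
  obtain f :: "'a \<Rightarrow> nat" where inj: "inj_on f V" using finite_imp_inj_to_nat_seg[OF finV] by blast
  define P where "P w \<sigma> \<longleftrightarrow> \<sigma> \<in> sources V D \<and> (\<sigma>, w) \<in> D\<^sup>* \<and>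
      (\<forall>\<sigma>'\<in>sources V D. (\<sigma>', w) \<in> D\<^sup>* \<longrightarrow> f \<sigma> \<le> f \<sigma>')" for w \<sigma>
  define s where "s w = (SOME \<sigma>. P w \<sigma>)" for w
  have sP: "P w (s w)" if wV0: "w \<in> V" for w
  proof -
    obtain \<sigma>0 where "\<sigma>0 \<in> sources V D \<and> (\<sigma>0, w) \<in> D\<^sup>*"
      using src_exists[OF finD assms(3) DV wV0] by blast
    then obtain \<sigma> where "(\<sigma> \<in> sources V D \<and> (\<sigma>, w) \<in> D\<^sup>*) \<and>
        (\<forall>y. (y \<in> sources V D \<and> (y, w) \<in> D\<^sup>*) \<longrightarrow> f \<sigma> \<le> f y)"
      using ex_has_least_nat[of "\<lambda>\<sigma>. \<sigma> \<in> sources V D \<and> (\<sigma>, w) \<in> D\<^sup>*" \<sigma>0 f] by blast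
    then have "P w \<sigma>" unfolding P_def by blast
    then show ?thesis unfolding s_def by (rule someI)
  qed
  have srcV: "sources V D \<subseteq> V" unfolding sources_def by auto
  have s_uniq: "s w = \<sigma>" if "w \<in> V" "P w \<sigma>" for w \<sigma>
  proof -
    have "f (s w) \<le> f \<sigma>" "f \<sigma> \<le> f (s w)" using sP[OF that(1)] that(2) unfolding P_def by auto
    then have "f (s w) = f \<sigma>" by simp
    moreover have "s w \<in> V" "\<sigma> \<in> V" using sP[OF that(1)] that(2) srcV unfolding P_def by auto
    ultimately show ?thesis using inj unfolding inj_on_def by blast
  qed
  have reachV: "x \<in> V" if "(a, x) \<in> D\<^sup>*" "a \<in> V" for a x
    using that by (induction rule: rtrancl_induct) (use DV in auto)
  have sV: "s w \<in> V" if "w \<in> V" for w using sP[OF that] srcV unfolding P_def by auto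
  have between: "s x = s u" if "u \<in> V" "(s u, x) \<in> D\<^sup>*" "(x, u) \<in> D\<^sup>*" for u x
  proof -
    have xV: "x \<in> V" using reachV[OF that(2) sV[OF that(1)]] .
    have "P x (s u)" using sP[OF that(1)] that(2,3) unfolding P_def by (meson rtrancl_trans)
    then show ?thesis using s_uniq[OF xV] by simp
  qed
  have src_self: "s \<sigma> = \<sigma>" if "\<sigma> \<in> sources V D" for \<sigma>
  proof -
    have eq: "\<sigma>' = \<sigma>" if "(\<sigma>', \<sigma>) \<in> D\<^sup>*" for \<sigma>'
      using that \<open>\<sigma> \<in> sources V D\<close> unfolding sources_def by (auto elim: rtranclE)
    have "P \<sigma> \<sigma>" using that unfolding P_def by (auto dest: eq)
    then show ?thesis using s_uniq srcV that by blast
  qed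
  define k0 where "k0 = (LEAST k. \<exists>(N::nat set) TE X. tree_decomp V E N TE X \<and> (\<forall>t\<in>N. card (X t) \<le> k))"
  have ex: "\<exists>k (N::nat set) TE X. tree_decomp V E N TE X \<and> (\<forall>t\<in>N. card (X t) \<le> k)"
  proof -
    have sp: "spath {0::nat} {} 0 0 p \<longleftrightarrow> p = [0]" for p
    proof
      assume h: "spath {0::nat} {} 0 0 p"
      then obtain a rest where p: "p = a # rest" unfolding spath_def by (cases p) auto
      have "a = 0" using h p unfolding spath_def by auto
      moreover have "rest = []" using h p unfolding spath_def by (cases rest) auto
      ultimately show "p = [0]" using p by simp
    qed (auto simp: spath_def)
    have "\<exists>!p. spath {0::nat} {} 0 0 p" using sp by auto
    then have T: "is_tree {0::nat} {}" unfolding is_tree_def by (simp add: irrefl_def)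
    have "\<forall>(u, v)\<in>E. \<exists>t\<in>{0::nat}. u \<in> V \<and> v \<in> V" using EV by blast
    then have "tree_decomp V E {0::nat} {} (\<lambda>_. V)" unfolding tree_decomp_def using T by simp
    then show ?thesis by blast
  qed
  have "\<exists>(N::nat set) TE X. tree_decomp V E N TE X \<and> (\<forall>t\<in>N. card (X t) \<le> k0)"
    unfolding k0_def by (rule LeastI_ex) (use ex in blast)
  then obtain N :: "nat set" and TE X where td: "tree_decomp V E N TE X" and bnd: "\<forall>t\<in>N. card (X t) \<le> k0"
    by blast
  have XV0: "\<forall>t\<in>N. X t \<subseteq> V" using td unfolding tree_decomp_def by (elim conjE)
  have XV: "X t \<subseteq> V" if "t \<in> N" for t using XV0 that by blast
  have cover0: "\<forall>v\<in>V. \<exists>t\<in>N. v \<in> X t" using td unfolding tree_decomp_def by (elim conjE)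
  have cover: "\<exists>t\<in>N. v \<in> X t" if "v \<in> V" for v using cover0 that by blast
  have edges: "\<forall>(u, v)\<in>E. \<exists>t\<in>N. u \<in> X t \<and> v \<in> X t" using td unfolding tree_decomp_def by (elim conjE)
  have T: "is_tree N TE" using td unfolding tree_decomp_def by (elim conjE)
  define X' where "X' t = s ` X t" for t
  have dtd: "dag_tree_decomp V D N TE X'"
    unfolding dag_tree_decomp_def
  proof (intro conjI ballI impI)
    show "is_tree N TE" by (rule T)
  next
    fix t assume "t \<in> N"
    show "X' t \<subseteq> sources V D"
    proof
      fix \<sigma> assume "\<sigma> \<in> X' t"
      then obtain w where "w \<in> X t" "\<sigma> = s w" unfolding X'_def by blast
      then have "w \<in> V" "\<sigma> = s w" using XV \<open>t \<in> N\<close> by blast+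
      then show "\<sigma> \<in> sources V D" using sP[of w] unfolding P_def by simp
    qed
  next
    fix \<sigma> assume h: "\<sigma> \<in> sources V D"
    then obtain t where "t \<in> N" "\<sigma> \<in> X t" using cover srcV by blast
    then show "\<exists>t\<in>N. \<sigma> \<in> X' t" using src_self[OF h] unfolding X'_def by force
  next
    fix t1 t2 t assume t1: "t1 \<in> N" and t2: "t2 \<in> N" and t: "t \<in> N" and op: "on_path N TE t1 t2 t"
    show "reach_set D (X' t1) \<inter> reach_set D (X' t2) \<subseteq> reach_set D (X' t)"
    proof
      fix v assume "v \<in> reach_set D (X' t1) \<inter> reach_set D (X' t2)"
      then obtain w1 w2 where w1: "w1 \<in> X t1" "(s w1, v) \<in> D\<^sup>*" and w2: "w2 \<in> X t2" "(s w2, v) \<in> D\<^sup>*"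
        unfolding reach_set_def reach_def X'_def by auto
      define W where "W = {w. w \<in> V \<and> (s w, v) \<in> D\<^sup>*}"
      define R where "R = {(a, b). a \<in> W \<and> b \<in> W \<and> (\<exists>t\<in>N. a \<in> X t \<and> b \<in> X t)}"
      have symR: "sym R" unfolding R_def sym_def by auto
      have edge: "(a, b) \<in> R" if "(a, b) \<in> D" "a \<in> W" "b \<in> W" for a b
        using edges that DE unfolding R_def by blast
      have chain: "(a, b) \<in> R\<^sup>*" if "(a, b) \<in> D\<^sup>*" "\<forall>x. (a, x) \<in> D\<^sup>* \<longrightarrow> (x, b) \<in> D\<^sup>* \<longrightarrow> x \<in> W" for a b
        using that
      proof (induction rule: rtrancl_induct)
        case base show ?case by simp
      next
        case (step b c)
        have H: "\<forall>x. (a, x) \<in> D\<^sup>* \<longrightarrow> (x, b) \<in> D\<^sup>* \<longrightarrow> x \<in> W"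
        proof (intro allI impI)
          fix x assume ax: "(a, x) \<in> D\<^sup>*" and xb: "(x, b) \<in> D\<^sup>*"
          have "(x, c) \<in> D\<^sup>*" using xb step.hyps(2) by (rule rtrancl_into_rtrancl)
          then show "x \<in> W" using step.prems ax by blast
        qed
        have IH': "(a, b) \<in> R\<^sup>*" using step.IH H by blast
        have bW: "b \<in> W" using step.prems step.hyps(1) r_into_rtrancl[OF step.hyps(2)] by blast
        have cW: "c \<in> W" using step.prems rtrancl_into_rtrancl[OF step.hyps] rtrancl_refl[of c D] by blast
        have "(b, c) \<in> R" by (rule edge[OF step.hyps(2) bW cW])
        then show ?case using IH' by (rule rtrancl_into_rtrancl[rotated])
      qed
      have symRs: "(b, a) \<in> R\<^sup>*" if "(a, b) \<in> R\<^sup>*" for a b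
        by (rule symD[OF sym_rtrancl[OF symR] that])
      have conn: "(w, v) \<in> R\<^sup>*" if wV: "w \<in> V" and wv: "(s w, v) \<in> D\<^sup>*" for w
      proof -
        have sw: "(s w, w) \<in> D\<^sup>*" using sP[OF wV] unfolding P_def by simp
        have "(s w, w) \<in> R\<^sup>*"
        proof (rule chain[OF sw], intro allI impI)
          fix x assume sx: "(s w, x) \<in> D\<^sup>*" and xw: "(x, w) \<in> D\<^sup>*"
          have xV: "x \<in> V" by (rule reachV[OF sx sV[OF wV]])
          have "s x = s w" by (rule between[OF wV sx xw])
          then show "x \<in> W" unfolding W_def using wv xV by simp
        qed
        then have 1: "(w, s w) \<in> R\<^sup>*" by (rule symRs)
        have 2: "(s w, v) \<in> R\<^sup>*"
        proof (rule chain[OF wv], intro allI impI)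
          fix x assume sx: "(s w, x) \<in> D\<^sup>*" and xv: "(x, v) \<in> D\<^sup>*"
          have xV: "x \<in> V" by (rule reachV[OF sx sV[OF wV]])
          have "(s x, x) \<in> D\<^sup>*" using sP[OF xV] unfolding P_def by simp
          then have "(s x, v) \<in> D\<^sup>*" using xv by (rule rtrancl_trans)
          then show "x \<in> W" unfolding W_def using xV by simp
        qed
        show ?thesis using 1 2 by (rule rtrancl_trans)
      qed
      have w1V: "w1 \<in> V" using XV[OF t1] w1(1) by blast
      have w2V: "w2 \<in> V" using XV[OF t2] w2(1) by blast
      have w12: "(w1, w2) \<in> R\<^sup>*" using conn[OF w1V w1(2)] symRs[OF conn[OF w2V w2(2)]] by (rule rtrancl_trans)
      have w1W: "w1 \<in> W" unfolding W_def using w1V w1(2) by simp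
      have RW: "\<And>a b. (a, b) \<in> R \<Longrightarrow> a \<in> W \<and> b \<in> W \<and> (\<exists>t\<in>N. a \<in> X t \<and> b \<in> X t)"
        unfolding R_def by simp
      have "\<exists>z\<in>W. z \<in> X t"
        by (rule separator[OF td R_def w12 w1W, rule_format, OF t1 t2 t w1(1) w2(1) op])
      then obtain z where z: "z \<in> W" "z \<in> X t" by blast
      have "s z \<in> X' t" unfolding X'_def using z(2) by (rule imageI)
      moreover have "v \<in> reach D (s z)" using z(1) unfolding W_def reach_def by simp
      ultimately show "v \<in> reach_set D (X' t)" unfolding reach_set_def by blast
    qed
  qed
  have "\<forall>t\<in>N. card (X' t) \<le> k0"
  proof
    fix t assume "t \<in> N"
    then have "card (X' t) \<le> card (X t)" unfolding X'_def
      using XV finV by (meson card_image_le finite_subset)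
    then show "card (X' t) \<le> k0" using bnd \<open>t \<in> N\<close> by auto
  qed
  then have "dag_treewidth V D \<le> k0" unfolding dag_treewidth_def
    by (intro Least_le) (use dtd in blast)
  moreover have "treewidth V E = int k0 - 1" unfolding treewidth_def k0_def by simp
  ultimately show ?thesis by simp
qed

end
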